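(* $\mathfrak{L}(SL(2,\mathbb{Z})) \subsetneq \mathfrak{L}(SL(2,\mathbb{Q}))$.
   Context: For a group $G$ with identity $e$, a $G$-automaton is a tuple $(Q,\Sigma,G,\delta,q_0,Q_a)$ where $Q$ is a finite set of states, $\Sigma$ a finite input alphabet, $q_0\in Q$ the initial state, $Q_a\subseteq Q$ the accepting states, and $\delta$ assigns to each $(q,\sigma)\in Q\times(\Sigma\cup\{\varepsilon\})$ a finite set of pairs $(q',m)\in Q\times G$. The register holds an element of $G$, initially $e$; using a transition $(q',m)\in\delta(q,\sigma)$ the automaton reads $\sigma$ (or nothing), moves to $q'$ and replaces the register content $x$ by $xm$. A word is accepted if some computation reads it entirely and ends in an accepting state with register equal to $e$. $\mathfrak{L}(G)$ is the class of languages recognized by $G$-automata. $SL(2,\mathbb{Z})$ (resp. $SL(2,\mathbb{Q})$) is the group of $2\times2$ matrices with integer (resp. rational) entries and determinant $1$. *)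

theory Defs
  imports Complex_Main "HOL-Algebra.Group"
begin

text \<open>2x2 matrices are represented as quadruples (a,b,c,d) standing for [[a,b],[c,d]].
  SL(2,R) is the group of such matrices of determinant 1, as a HOL-Algebra monoid record.\<close>

definition SL2 :: "('r::comm_ring_1 \<times> 'r \<times> 'r \<times> 'r) monoid" where
  "SL2 = \<lparr> carrier = {(a,b,c,d). a*d - b*c = 1},
           mult = (\<lambda>(a,b,c,d) (e,f,g,h). (a*e + b*g, a*f + b*h, c*e + d*g, c*f + d*h)),
           one = (1,0,0,1) \<rparr>"

abbreviation SL2Z :: "(int \<times> int \<times> int \<times> int) monoid" where "SL2Z \<equiv> SL2"
abbreviation SL2Q :: "(rat \<times> rat \<times> rat \<times> rat) monoid" where "SL2Q \<equiv> SL2"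

text \<open>A G-automaton over alphabet \<Sigma>, with states in Q (a finite set of naturals),
  transitions given as a finite set of tuples (q, \<sigma>, q', m) where \<sigma> = None is an
  \<epsilon>-move, initial state q0 and accepting states Qa.\<close>

definition is_gaut ::
  "('g,'x) monoid_scheme \<Rightarrow> 'a set \<Rightarrow> nat set \<Rightarrow> (nat \<times> 'a option \<times> nat \<times> 'g) set
     \<Rightarrow> nat \<Rightarrow> nat set \<Rightarrow> bool" where
  "is_gaut G \<Sigma> Q \<Delta> q0 Qa \<longleftrightarrow> finite \<Sigma> \<and> finite Q \<and> q0 \<in> Q \<and> Qa \<subseteq> Q \<and> finite \<Delta> \<and>
     (\<forall>(q,s,q',m)\<in>\<Delta>. q \<in> Q \<and> q' \<in> Q \<and> set_option s \<subseteq> \<Sigma> \<and> m \<in> carrier G)"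

text \<open>Reachable configurations (state, word read so far, register content) from the
  initial configuration (q0, [], e).\<close>
inductive_set gaut_reach ::
  "('g,'x) monoid_scheme \<Rightarrow> (nat \<times> 'a option \<times> nat \<times> 'g) set \<Rightarrow> nat
     \<Rightarrow> (nat \<times> 'a list \<times> 'g) set"
  for G \<Delta> q0 where
  init: "(q0, [], \<one>\<^bsub>G\<^esub>) \<in> gaut_reach G \<Delta> q0"
| step: "(q, w, x) \<in> gaut_reach G \<Delta> q0 \<Longrightarrow> (q, s, q', m) \<in> \<Delta> \<Longrightarrow>
         (q', w @ (case s of None \<Rightarrow> [] | Some a \<Rightarrow> [a]), x \<otimes>\<^bsub>G\<^esub> m) \<in> gaut_reach G \<Delta> q0"

definition gaut_lang ::
  "('g,'x) monoid_scheme \<Rightarrow> (nat \<times> 'a option \<times> nat \<times> 'g) set \<Rightarrow> nat \<Rightarrow> nat set \<Rightarrow> 'a list set" where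
  "gaut_lang G \<Delta> q0 Qa = {w. \<exists>q\<in>Qa. (q, w, \<one>\<^bsub>G\<^esub>) \<in> gaut_reach G \<Delta> q0}"

definition lang_class :: "('g,'x) monoid_scheme \<Rightarrow> 'a set \<Rightarrow> 'a list set set" where
  "lang_class G \<Sigma> = {L. \<exists>Q \<Delta> q0 Qa. is_gaut G \<Sigma> Q \<Delta> q0 Qa \<and> L = gaut_lang G \<Delta> q0 Qa}"

end

theory Submission
  imports Defs
begin


fun mm :: "('r::comm_ring_1 \<times> 'r \<times> 'r \<times> 'r) \<Rightarrow> ('r \<times> 'r \<times> 'r \<times> 'r) \<Rightarrow> ('r \<times> 'r \<times> 'r \<times> 'r)" where
  "mm (a,b,c,d) (e,f,g,h) = (a*e + b*g, a*f + b*h, c*e + d*g, c*f + d*h)"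

lemma mult_SL2: "mult SL2 x y = mm x y"
  by (cases x; cases y) (simp add: SL2_def)

lemma one_SL2: "one SL2 = (1,0,0,1)"
  by (simp add: SL2_def)

fun det :: "('r::comm_ring_1 \<times> 'r \<times> 'r \<times> 'r) \<Rightarrow> 'r" where
  "det (a,b,c,d) = a*d - b*c"

lemma carrier_SL2: "x \<in> carrier SL2 \<longleftrightarrow> det x = 1"
  by (cases x) (simp add: SL2_def)

abbreviation I :: "('r::comm_ring_1 \<times> 'r \<times> 'r \<times> 'r)" where "I \<equiv> (1,0,0,1)"

lemma mm_assoc: "mm (mm x y) z = mm x (mm y z)"
  by (cases x; cases y; cases z) (simp add: algebra_simps)

lemma mm_I1[simp]: "mm I x = x" and mm_I2[simp]: "mm x I = x"
  by (cases x; simp)+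

lemma det_mm: "det (mm x y) = det x * det y"
  by (cases x; cases y) (simp add: algebra_simps)

fun neg :: "('r::comm_ring_1 \<times> 'r \<times> 'r \<times> 'r) \<Rightarrow> ('r \<times> 'r \<times> 'r \<times> 'r)" where
  "neg (a,b,c,d) = (-a,-b,-c,-d)"

lemma neg_neg[simp]: "neg (neg x) = x" by (cases x) simp
lemma mm_neg1[simp]: "mm (neg x) y = neg (mm x y)" by (cases x; cases y) simp
lemma mm_neg2[simp]: "mm x (neg y) = neg (mm x y)" by (cases x; cases y) simp

fun minv :: "('r::comm_ring_1 \<times> 'r \<times> 'r \<times> 'r) \<Rightarrow> ('r \<times> 'r \<times> 'r \<times> 'r)" where
  "minv (a,b,c,d) = (d,-b,-c,a)"

lemma minv_l: "det x = 1 \<Longrightarrow> mm (minv x) x = I"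
  by (cases x) (simp add: algebra_simps)
lemma minv_r: "det x = 1 \<Longrightarrow> mm x (minv x) = I"
  by (cases x) (simp add: algebra_simps)

definition pm :: "('r::comm_ring_1 \<times> 'r \<times> 'r \<times> 'r) \<Rightarrow> ('r \<times> 'r \<times> 'r \<times> 'r) \<Rightarrow> bool" where
  "pm x y \<longleftrightarrow> x = y \<or> x = neg y"

lemma pm_refl[simp]: "pm x x" by (simp add: pm_def)
lemma pm_sym: "pm x y \<Longrightarrow> pm y x" by (auto simp add: pm_def)
lemma pm_trans: "pm x y \<Longrightarrow> pm y z \<Longrightarrow> pm x z" by (auto simp add: pm_def)
lemma neg_inj[simp]: "neg x = neg y \<longleftrightarrow> x = y"
  by (metis neg_neg)
lemma pm_neg[simp]: "pm x (neg y) \<longleftrightarrow> pm x y" "pm (neg x) y \<longleftrightarrow> pm x y"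
  by (auto simp add: pm_def)
lemma pm_mm: "pm x y \<Longrightarrow> pm z w \<Longrightarrow> pm (mm x z) (mm y w)"
  by (auto simp add: pm_def)

datatype lt = LS | LU | LU2

lemma UNIV_lt: "(UNIV :: lt set) = {LS, LU, LU2}"
  using lt.exhaust by auto
lemma finite_lt[simp]: "finite (UNIV :: lt set)"
  by (simp add: UNIV_lt)

fun lm :: "lt \<Rightarrow> int \<times> int \<times> int \<times> int" where
  "lm LS = (0,-1,1,0)" | "lm LU = (1,-1,1,0)" | "lm LU2 = (0,-1,1,-1)"

fun ev :: "lt list \<Rightarrow> int \<times> int \<times> int \<times> int" where
  "ev [] = I" | "ev (x#xs) = mm (lm x) (ev xs)"

lemma ev_append: "ev (xs @ ys) = mm (ev xs) (ev ys)"
  by (induction xs) (auto simp add: mm_assoc)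

lemma det_lm: "det (lm x) = 1" by (cases x) auto
lemma det_ev: "det (ev w) = 1"
  by (induction w) (auto simp add: det_mm det_lm)

fun alt :: "lt list \<Rightarrow> bool" where
  "alt (x#y#r) = ((x = LS) \<noteq> (y = LS) \<and> alt (y#r))"
| "alt _ = True"

lemma alt_Cons: "alt (x#xs) \<longleftrightarrow> alt xs \<and> (xs \<noteq> [] \<longrightarrow> (x = LS) \<noteq> (hd xs = LS))"
  by (cases xs) auto

lemma alt_append: "alt (xs @ ys) \<longleftrightarrow> alt xs \<and> alt ys \<and> (xs \<noteq> [] \<and> ys \<noteq> [] \<longrightarrow> (last xs = LS) \<noteq> (hd ys = LS))"
  by (induction xs) (auto simp add: alt_Cons)

lemma alt_rev: "alt (rev xs) \<longleftrightarrow> alt xs"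
  by (induction xs) (auto simp add: alt_append alt_Cons hd_rev last_rev)

fun mv :: "int \<times> int \<times> int \<times> int \<Rightarrow> int \<times> int \<Rightarrow> int \<times> int" where
  "mv (a,b,c,d) (x,y) = (a*x+b*y, c*x+d*y)"

lemma mv_mm: "mv (mm A B) v = mv A (mv B v)"
  by (cases A; cases B; cases v) (simp add: algebra_simps)

definition Pos :: "int \<times> int \<Rightarrow> bool" where "Pos v \<longleftrightarrow> fst v * snd v > 0"
definition Ng :: "int \<times> int \<Rightarrow> bool" where "Ng v \<longleftrightarrow> fst v * snd v < 0"
definition Str :: "int \<times> int \<Rightarrow> bool" where "Str v \<longleftrightarrow> \<bar>fst v\<bar> \<noteq> \<bar>snd v\<bar>"

lemma S_pos: "Pos v \<Longrightarrow> Ng (mv (lm LS) v) \<and> (Str v \<longrightarrow> Str (mv (lm LS) v))"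
  by (cases v) (auto simp add: Pos_def Ng_def Str_def algebra_simps)

lemma U_neg: "x \<noteq> LS \<Longrightarrow> Ng v \<Longrightarrow> Pos (mv (lm x) v) \<and> Str (mv (lm x) v)"
proof -
  assume x: "x \<noteq> LS" and n: "Ng v"
  obtain a b where v: "v = (a,b)" by (cases v)
  have ab: "(a > 0 \<and> b < 0) \<or> (a < 0 \<and> b > 0)" using n v by (auto simp add: Ng_def mult_less_0_iff)
  show ?thesis
  proof (cases x)
    case LU
    then show ?thesis using ab v by (auto simp add: Pos_def Str_def zero_less_mult_iff)
  next
    case LU2
    have "b*(a-b) < 0" using ab by (auto simp add: mult_less_0_iff)
    then show ?thesis using LU2 ab v by (auto simp add: Pos_def Str_def zero_less_mult_iff)
  qed (use x in auto)
qed

lemma pingA: "alt w \<Longrightarrow> w \<noteq> [] \<Longrightarrow> last w = LS \<Longrightarrow> Pos v \<Longrightarrow>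
  (hd w = LS \<longrightarrow> Ng (mv (ev w) v)) \<and> (hd w \<noteq> LS \<longrightarrow> Pos (mv (ev w) v) \<and> Str (mv (ev w) v))"
proof (induction w)
  case Nil then show ?case by simp
next
  case (Cons x xs)
  show ?case
  proof (cases "xs = []")
    case True
    then show ?thesis using Cons S_pos by auto
  next
    case False
    have IH: "(hd xs = LS \<longrightarrow> Ng (mv (ev xs) v)) \<and> (hd xs \<noteq> LS \<longrightarrow> Pos (mv (ev xs) v) \<and> Str (mv (ev xs) v))"
      using Cons False by (auto simp add: alt_Cons)
    have alt: "(x = LS) \<noteq> (hd xs = LS)" using Cons.prems False by (auto simp add: alt_Cons)
    show ?thesis
    proof (cases "hd xs = LS")
      case True
      then show ?thesis using IH alt U_neg[of x "mv (ev xs) v"] by (auto simp add: mv_mm)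
    next
      case f: False
      then show ?thesis using IH alt S_pos[of "mv (ev xs) v"] by (auto simp add: mv_mm)
    qed
  qed
qed

lemma pingB: "alt w \<Longrightarrow> w \<noteq> [] \<Longrightarrow> last w \<noteq> LS \<Longrightarrow> Ng v \<Longrightarrow>
  (hd w = LS \<longrightarrow> Ng (mv (ev w) v) \<and> Str (mv (ev w) v)) \<and> (hd w \<noteq> LS \<longrightarrow> Pos (mv (ev w) v) \<and> Str (mv (ev w) v))"
proof (induction w)
  case Nil then show ?case by simp
next
  case (Cons x xs)
  show ?case
  proof (cases "xs = []")
    case True
    then show ?thesis using Cons U_neg by auto
  next
    case False
    have IH: "(hd xs = LS \<longrightarrow> Ng (mv (ev xs) v) \<and> Str (mv (ev xs) v)) \<and> (hd xs \<noteq> LS \<longrightarrow> Pos (mv (ev xs) v) \<and> Str (mv (ev xs) v))"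
      using Cons False by (auto simp add: alt_Cons)
    have alt: "(x = LS) \<noteq> (hd xs = LS)" using Cons.prems False by (auto simp add: alt_Cons)
    show ?thesis
    proof (cases "hd xs = LS")
      case True
      then show ?thesis using IH alt U_neg[of x "mv (ev xs) v"] by (auto simp add: mv_mm)
    next
      case f: False
      then show ?thesis using IH alt S_pos[of "mv (ev xs) v"] by (auto simp add: mv_mm)
    qed
  qed
qed

lemma pingpong: "alt w \<Longrightarrow> w \<noteq> [] \<Longrightarrow> \<not> pm (ev w) I"
proof
  assume a: "alt w" "w \<noteq> []" "pm (ev w) I"
  have e: "mv (ev w) v = v \<or> mv (ev w) v = (- fst v, - snd v)" for v
    using a(3) by (cases v) (auto simp add: pm_def)
  show False
  proof (cases "last w = LS")
    case True
    have p: "Pos (1,1)" by (simp add: Pos_def)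
    have "Ng (1,1) \<or> Str (1,1)" if "Ng (mv (ev w) (1,1)) \<or> Str (mv (ev w) (1,1))"
      using that e[of "(1,1)"] by (auto simp add: Ng_def Str_def)
    then show False using pingA[OF a(1,2) True p] by (auto simp add: Ng_def Str_def split: if_splits)
  next
    case False
    have p: "Ng (1,-1)" by (simp add: Ng_def)
    have "Pos (1,-1) \<or> Str (1,-1)" if "Pos (mv (ev w) (1,-1)) \<or> Str (mv (ev w) (1,-1))"
      using that e[of "(1,-1)"] by (auto simp add: Pos_def Str_def)
    then show False using pingB[OF a(1,2) False p] by (auto simp add: Pos_def Str_def split: if_splits)
  qed
qed



fun linv :: "lt \<Rightarrow> lt" where
  "linv LS = LS" | "linv LU = LU2" | "linv LU2 = LU"

lemma linv_LS[simp]: "(linv x = LS) \<longleftrightarrow> (x = LS)" by (cases x) auto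

lemma mm_negI[simp]: "mm (-1,0,0,-1) x = neg x" by (cases x) auto

lemma lm_linv: "mm (lm (linv x)) (lm x) = neg I" by (cases x) auto

definition winv :: "lt list \<Rightarrow> lt list" where "winv w = rev (map linv w)"

lemma winv_Cons: "winv (x#xs) = winv xs @ [linv x]" by (simp add: winv_def)
lemma winv_Nil[simp]: "winv [] = []" by (simp add: winv_def)

lemma alt_map_linv: "alt (map linv w) \<longleftrightarrow> alt w"
  by (induction w rule: alt.induct) auto

lemma alt_winv: "alt (winv w) \<longleftrightarrow> alt w"
  by (simp add: winv_def alt_rev alt_map_linv)

lemma ev_winv: "pm (mm (ev (winv w)) (ev w)) I"
proof (induction w)
  case Nil then show ?case by simp
next
  case (Cons x xs)
  have "mm (ev (winv (x#xs))) (ev (x#xs)) = mm (ev (winv xs)) (mm (mm (lm (linv x)) (lm x)) (ev xs))"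
    by (simp add: winv_Cons ev_append mm_assoc)
  also have "\<dots> = neg (mm (ev (winv xs)) (ev xs))" by (simp add: lm_linv)
  finally show ?case using Cons by simp
qed

lemma last_winv: "xs \<noteq> [] \<Longrightarrow> last (winv xs) = linv (hd xs)"
  by (simp add: winv_def last_rev hd_map)

lemma mm_cancel_l: "det z = 1 \<Longrightarrow> pm (mm z x) (mm z y) \<Longrightarrow> pm x y"
proof -
  assume d: "det z = 1" and p: "pm (mm z x) (mm z y)"
  have "pm (mm (minv z) (mm z x)) (mm (minv z) (mm z y))" using p pm_mm[OF pm_refl] by blast
  then show ?thesis by (simp add: mm_assoc[symmetric] minv_l[OF d])
qed

lemma combine_contra:
  assumes "alt c" "c \<noteq> []" "pm (ev c) (mm (ev (winv w')) (ev w))" "pm (ev w) (ev w')"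
  shows False
proof -
  have "pm (mm (ev (winv w')) (ev w)) (mm (ev (winv w')) (ev w'))"
    using assms(4) pm_mm[OF pm_refl] by blast
  then have "pm (ev c) I" using assms(3) ev_winv pm_trans by blast
  then show False using pingpong assms(1,2) by blast
qed

lemma uniq: "alt w \<Longrightarrow> alt w' \<Longrightarrow> pm (ev w) (ev w') \<Longrightarrow> w = w'"
proof (induction w arbitrary: w')
  case Nil
  then show ?case using pingpong[of w'] by (cases w') (auto dest: pm_sym)
next
  case (Cons x r)
  show ?case
  proof (cases w')
    case Nil
    then show ?thesis using pingpong[of "x#r"] Cons.prems by auto
  next
    case (Cons x' r')
    note w' = this
    have ar: "alt r" and ar': "alt r'" using Cons.prems w' by (auto simp add: alt_Cons)
    show ?thesis
    proof (cases "x = x'")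
      case True
      then have "pm (ev r) (ev r')" using Cons.prems w' mm_cancel_l[OF det_lm] by auto
      then show ?thesis using Cons.IH ar ar' True w' by auto
    next
      case False
      have hr': "r' \<noteq> [] \<Longrightarrow> (hd r' = LS) \<noteq> (x' = LS)" using Cons.prems w' by (auto simp add: alt_Cons)
      have hr: "r \<noteq> [] \<Longrightarrow> (hd r = LS) \<noteq> (x = LS)" using Cons.prems by (auto simp add: alt_Cons)
      have ev_c: "mm (ev (winv w')) (ev (x#r)) = mm (ev (winv r')) (mm (mm (lm (linv x')) (lm x)) (ev r))"
        using w' by (simp add: winv_Cons ev_append mm_assoc)
      have aw: "alt (winv r')" using ar' alt_winv by blast
      have lw: "winv r' \<noteq> [] \<Longrightarrow> (last (winv r') = LS) \<noteq> (x' = LS)"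
        using hr' last_winv[of r'] by (auto simp add: winv_def)
      have False
      proof (cases "(x' = LS) = (x = LS)")
        case same: True
        then have xx: "x \<noteq> LS" "x' \<noteq> LS" using False by auto
        define y where "y = x'"
        have y: "pm (mm (lm (linv x')) (lm x)) (lm y)" "y \<noteq> LS"
          using False xx unfolding y_def by (cases x; cases x'; simp add: pm_def)+
        define c where "c = winv r' @ [y] @ r"
        have "alt c" unfolding c_def using aw ar lw hr xx y(2)
          by (auto simp add: alt_append alt_Cons)
        moreover have "pm (ev c) (mm (ev (winv w')) (ev (x#r)))"
          unfolding ev_c c_def using y(1) by (simp add: ev_append pm_mm pm_sym)
        ultimately show False using combine_contra Cons.prems w' unfolding c_def by blast
      next
        case diff: False
        define c where "c = winv r' @ [linv x', x] @ r"
        have "alt c" unfolding c_def using aw ar lw hr diff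
          by (auto simp add: alt_append alt_Cons)
        moreover have "pm (ev c) (mm (ev (winv w')) (ev (x#r)))"
          unfolding ev_c c_def by (simp add: ev_append mm_assoc)
        ultimately show False using combine_contra Cons.prems w' unfolding c_def by blast
      qed
      then show ?thesis ..
    qed
  qed
qed



lemma mm_negI2[simp]: "mm x (-1,0,0,-1) = neg x" by (cases x) auto

lemma ev_snoc: "ev (w @ [x]) = mm (ev w) (lm x)"
  by (simp add: ev_append)

lemma step_letter:
  assumes "alt w"
  shows "\<exists>w''. alt w'' \<and> pm (ev (w @ [x])) (ev w'') \<and>
     (w'' = w @ [x] \<or> (w \<noteq> [] \<and> w'' = butlast w) \<or> (w \<noteq> [] \<and> (\<exists>y. w'' = butlast w @ [y])))"
proof (cases w rule: rev_exhaust)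
  case Nil
  then show ?thesis by auto
next
  case (snoc w0 a)
  have a0: "alt w0" and aw0: "w0 \<noteq> [] \<Longrightarrow> (last w0 = LS) \<noteq> (a = LS)"
    using assms snoc by (auto simp add: alt_append)
  show ?thesis
  proof (cases "(a = LS) = (x = LS)")
    case False
    then have "alt (w @ [x])" using assms snoc by (auto simp add: alt_append)
    then show ?thesis by auto
  next
    case True
    have e: "ev (w @ [x]) = mm (ev w0) (mm (lm a) (lm x))" using snoc by (simp add: ev_append mm_assoc)
    show ?thesis
    proof (cases a)
      case LS
      then have "x = LS" using True by simp
      then have "pm (ev (w @ [x])) (ev w0)" using e LS by simp
      then show ?thesis using a0 snoc by auto
    next
      case LU
      show ?thesis
      proof (cases x)
        case LU
        then have "pm (ev (w @ [x])) (ev (w0 @ [LU2]))" using e \<open>a = LU\<close> by (simp add: ev_append)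
        moreover have "alt (w0 @ [LU2])" using a0 aw0 \<open>a = LU\<close> by (auto simp add: alt_append)
        ultimately show ?thesis using snoc by auto
      next
        case LU2
        then have "pm (ev (w @ [x])) (ev w0)" using e \<open>a = LU\<close> by simp
        then show ?thesis using a0 snoc by auto
      qed (use True LU in auto)
    next
      case LU2
      show ?thesis
      proof (cases x)
        case LU
        then have "pm (ev (w @ [x])) (ev w0)" using e \<open>a = LU2\<close> by simp
        then show ?thesis using a0 snoc by auto
      next
        case LU2
        have "mm (lm a) (lm x) = neg (lm LU)" using LU2 \<open>a = LU2\<close> by simp
        then have "ev (w @ [x]) = neg (mm (ev w0) (lm LU))" using e by (simp only: mm_neg2)
        then have "pm (ev (w @ [x])) (ev (w0 @ [LU]))" by (simp only: ev_append pm_neg ev.simps mm_I2 pm_refl)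
        moreover have "alt (w0 @ [LU])" using a0 aw0 \<open>a = LU2\<close> by (auto simp add: alt_append)
        ultimately show ?thesis using snoc by auto
      qed (use True LU2 in auto)
    qed
  qed
qed

lemma app_word:
  assumes "alt w"
  shows "\<exists>k v. k \<le> length u \<and> length v \<le> length u \<and> alt (take (length w - k) w @ v) \<and>
            pm (ev (w @ u)) (ev (take (length w - k) w @ v))"
proof (induction u rule: rev_induct)
  case Nil
  show ?case using assms by (intro exI[of _ 0] exI[of _ "[]"]) auto
next
  case (snoc x u)
  then obtain k v where kv: "k \<le> length u" "length v \<le> length u" "alt (take (length w - k) w @ v)"
     "pm (ev (w @ u)) (ev (take (length w - k) w @ v))" by blast
  define w' where "w' = take (length w - k) w @ v"
  obtain w'' where w'': "alt w''" "pm (ev (w' @ [x])) (ev w'')"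
     "w'' = w' @ [x] \<or> (w' \<noteq> [] \<and> w'' = butlast w') \<or> (w' \<noteq> [] \<and> (\<exists>y. w'' = butlast w' @ [y]))"
    using step_letter[OF kv(3)[folded w'_def]] by blast
  have pe: "pm (ev (w @ (u @ [x]))) (ev w'')"
  proof -
    have e1: "ev (w' @ [x]) = mm (ev w') (lm x)" by (rule ev_snoc)
    have e2: "ev (w @ (u@[x])) = mm (ev (w@u)) (lm x)" by (metis append_assoc ev_snoc)
    have "pm (ev (w @ (u @ [x]))) (ev (w' @ [x]))"
      unfolding e1 e2 using pm_mm[OF kv(4)[folded w'_def] pm_refl] .
    then show ?thesis using w''(2) pm_trans by blast
  qed
  have bt: "butlast (take (length w - k) w) = take (length w - Suc k) w"
    by (simp add: butlast_take)
  from w''(3) show ?case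
  proof (elim disjE conjE exE)
    assume "w'' = w' @ [x]"
    then show ?case using pe w''(1) kv unfolding w'_def
      by (intro exI[of _ k] exI[of _ "v @ [x]"]) auto
  next
    assume ne: "w' \<noteq> []" and e: "w'' = butlast w'"
    show ?case
    proof (cases "v = []")
      case True
      then show ?thesis using pe w''(1) kv e bt unfolding w'_def
        by (intro exI[of _ "Suc k"] exI[of _ "[]"]) auto
    next
      case False
      then show ?thesis using pe w''(1) kv e unfolding w'_def
        by (intro exI[of _ k] exI[of _ "butlast v"]) (auto simp add: butlast_append)
    qed
  next
    fix y
    assume ne: "w' \<noteq> []" and e: "w'' = butlast w' @ [y]"
    show ?case
    proof (cases "v = []")
      case True
      then show ?thesis using pe w''(1) kv e bt unfolding w'_def
        by (intro exI[of _ "Suc k"] exI[of _ "[y]"]) auto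
    next
      case False
      then show ?thesis using pe w''(1) kv e unfolding w'_def
        by (intro exI[of _ k] exI[of _ "butlast v @ [y]"]) (auto simp add: butlast_append)
    qed
  qed
qed

lemma Tpow: "\<exists>w. pm ((1::int),k,0,1) (ev w)"
proof (induction k rule: int_induct[where k=0])
  case base
  then show ?case by (intro exI[of _ "[]"]) simp
next
  case (step1 i)
  then obtain w where w: "pm ((1::int),i,0,1) (ev w)" by blast
  have t: "pm ((1::int),1,0,1) (ev [LU,LS])" by (simp add: pm_def)
  have "pm (mm (1,i,0,1) (1,1,0,1)) (mm (ev w) (ev [LU,LS]))" using pm_mm[OF w t] .
  moreover have "mm ((1::int),i,0,1) (1,1,0,1) = (1,i+1,0,1)" by simp
  ultimately show ?case by (metis ev_append)
next
  case (step2 i)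
  then obtain w where w: "pm ((1::int),i,0,1) (ev w)" by blast
  have t: "pm ((1::int),-1,0,1) (ev [LS,LU2])" by (simp add: pm_def)
  have "pm (mm (1,i,0,1) (1,-1,0,1)) (mm (ev w) (ev [LS,LU2]))" using pm_mm[OF w t] .
  moreover have "mm ((1::int),i,0,1) (1,-1,0,1) = (1,i-1,0,1)" by simp
  ultimately show ?case by (metis ev_append)
qed

lemma ex_word: "det M = (1::int) \<Longrightarrow> \<exists>w. pm M (ev w)"
proof (induction "nat \<bar>fst (snd (snd M))\<bar>" arbitrary: M rule: less_induct)
  case less
  obtain a b c d where M: "M = (a,b,c,d)" by (cases M)
  show ?case
  proof (cases "c = 0")
    case True
    then have ad: "a * d = 1" using less.prems M by simp
    then have "(a = 1 \<and> d = 1) \<or> (a = -1 \<and> d = -1)" using zmult_eq_1_iff by blast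
    then show ?thesis
    proof
      assume "a = 1 \<and> d = 1"
      then show ?thesis using Tpow[of b] M True by auto
    next
      assume "a = -1 \<and> d = -1"
      then have Mn: "M = neg (1,-b,0,1)" using M True by simp
      obtain w where w: "pm (1,-b,0,1) (ev w)" using Tpow[of "-b"] by blast
      have "pm (neg (1,-b,0,1)) (ev w)" using w by (simp only: pm_neg)
      then show ?thesis using Mn by blast
    qed
  next
    case False
    define k where "k = a div c"
    define M' where "M' = (-c, -d, a - k*c, b - k*d)"
    have amod: "a - k*c = a mod c" unfolding k_def by (simp add: minus_div_mult_eq_mod)
    have lt: "\<bar>a mod c\<bar> < \<bar>c\<bar>" using False abs_mod_less by blast
    have dM': "det M' = 1" using less.prems M unfolding M'_def by (simp add: algebra_simps)
    have "nat \<bar>fst (snd (snd M'))\<bar> < nat \<bar>fst (snd (snd M))\<bar>" using lt amod M M'_def by simp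
    then obtain w' where w': "pm M' (ev w')" using less.hyps dM' by blast
    obtain wk where wk: "pm (1,k,0,1) (ev wk)" using Tpow by blast
    have "M = mm (1,k,0,1) (mm (neg (lm LS)) M')" unfolding M'_def M by (simp add: algebra_simps)
    then have "pm M (mm (ev wk) (mm (ev [LS]) (ev w')))"
      using pm_mm[OF wk pm_mm[OF _ w']] by (simp add: pm_def) 
    then show ?thesis by (metis ev_append)
  qed
qed

lemma ex_nf: "det M = (1::int) \<Longrightarrow> \<exists>w. alt w \<and> pm M (ev w)"
proof -
  assume "det M = 1"
  then obtain u where u: "pm M (ev u)" using ex_word by blast
  obtain k v where "alt (take (length [] - k) [] @ v)" "pm (ev ([] @ u)) (ev (take (length [] - k) [] @ v))"
    using app_word[of "[]" u] by auto
  then have "alt v" "pm (ev u) (ev v)" by auto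
  moreover have "pm M (ev v)" using u calculation(2) by (rule pm_trans)
  ultimately show ?thesis by blast
qed



definition words :: "nat \<Rightarrow> lt list set" where "words n = {xs. length xs \<le> n}"

lemma finite_words: "finite (words n)"
proof -
  have "words n = {xs. set xs \<subseteq> UNIV \<and> length xs \<le> n}" by (simp add: words_def)
  then show ?thesis using finite_lists_length_le[OF finite_lt] by simp
qed

lemma take_prefix: "h \<le> m \<Longrightarrow> m \<le> length xs \<Longrightarrow> take h (take m xs @ v) = take h xs"
  by (simp add: take_append min_def)

lemma pigeon:
  assumes "finite B" "f ` A \<subseteq> B" "card B < card A" "finite A"
  shows "\<exists>i\<in>A. \<exists>j\<in>A. i \<noteq> j \<and> f i = f j"
proof (rule ccontr)
  assume "\<not> ?thesis"
  then have "inj_on f A" by (auto simp add: inj_on_def)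
  then have "card A \<le> card B" using card_inj_on_le assms by blast
  then show False using assms by simp
qed

lemma pigeon_nat:
  assumes "finite B" "\<forall>i\<le>n. f i \<in> B" "card B < Suc n"
  shows "\<exists>i j. i < j \<and> j \<le> n \<and> f i = f j"
proof -
  have im: "f ` {0..n} \<subseteq> B" using assms(2) by auto
  have "\<exists>i\<in>{0..n}. \<exists>j\<in>{0..n}. i \<noteq> j \<and> f i = f j"
    using pigeon[OF assms(1) im] assms(3) by simp
  then obtain i j where "i \<le> n" "j \<le> n" "i \<noteq> j" "f i = f j" by auto
  then show ?thesis by (metis linorder_neqE_nat)
qed

lemma core:
  fixes P :: "nat \<Rightarrow> lt list" and f :: "nat \<Rightarrow> 'k" and F :: "'k set"
  assumes finF: "finite F" and fF: "\<forall>i\<le>N. f i \<in> F" and P0: "P 0 = []" and PN: "P N = []"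
    and step: "\<forall>i<N. \<exists>k v. k \<le> C \<and> length v \<le> C \<and> P (Suc i) = take (length (P i) - k) (P i) @ v"
    and big: "card F * card (words (card F * card F * card (words (2*C)) * card (words (2*C)) * (C+1))) < Suc N"
  shows "\<exists>s1 s2 t2 t1. s1 \<le> s2 \<and> s2 \<le> t2 \<and> t2 \<le> t1 \<and> t1 \<le> N \<and> (s1 < s2 \<or> t2 < t1) \<and>
      f s1 = f s2 \<and> f t2 = f t1 \<and>
      (\<exists>u1 u2 v1 v2. P s1 = u1@v1 \<and> P t1 = u1@v2 \<and> P s2 = u2@v1 \<and> P t2 = u2@v2)"
proof -
  define W2 where "W2 = words (2*C)"
  define KB where "KB = card F * card F * card W2 * card W2"
  define B where "B = KB * (C+1)"
  define H where "H = Max ((\<lambda>i. length (P i)) ` {0..N})"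
  have Hge: "length (P i) \<le> H" if "i \<le> N" for i
    unfolding H_def using that by (intro Max_ge) auto
  obtain i0 where i0: "i0 \<le> N" "length (P i0) = H"
  proof -
    have "H \<in> (\<lambda>i. length (P i)) ` {0..N}" unfolding H_def by (intro Max_in) auto
    then show ?thesis using that by auto
  qed
  have lenstep: "length (P (Suc i)) \<le> length (P i) + C \<and> length (P i) \<le> length (P (Suc i)) + C" if iN: "i < N" for i
  proof -
    obtain k v where "k \<le> C" "length v \<le> C" "P (Suc i) = take (length (P i) - k) (P i) @ v"
      using step iN by blast
    then show ?thesis by auto
  qed
  show ?thesis
  proof (cases "H \<le> B")
    case True
    have "\<forall>i\<le>N. (f i, P i) \<in> F \<times> words B" using fF Hge True by (auto simp add: words_def intro: le_trans)
    moreover have "card (F \<times> words B) < Suc N" using big unfolding B_def KB_def W2_def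
      by (simp add: card_cartesian_product)
    moreover have "finite (F \<times> words B)" using finF finite_words by simp
    ultimately obtain i j where ij: "i < j" "j \<le> N" "(f i, P i) = (f j, P j)"
      using pigeon_nat[of "F \<times> words B" N "\<lambda>i. (f i, P i)"] by blast
    have "P i = P j @ [] \<and> P j = P j @ [] \<and> P j = P j @ [] \<and> P j = P j @ []" using ij by simp
    then have ex: "\<exists>u1 u2 v1 v2. P i = u1@v1 \<and> P j = u1@v2 \<and> P j = u2@v1 \<and> P j = u2@v2" by blast
    have fij: "f i = f j" using ij by simp
    have fin: "i \<le> j \<and> j \<le> j \<and> j \<le> j \<and> j \<le> N \<and> (i < j \<or> j < j) \<and> f i = f j \<and> f j = f j \<and>
      (\<exists>u1 u2 v1 v2. P i = u1@v1 \<and> P j = u1@v2 \<and> P j = u2@v1 \<and> P j = u2@v2)"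
      using ij(1,2) fij ex by simp
    show ?thesis
      by (rule exI[of _ i], rule exI[of _ j], rule exI[of _ j], rule exI[of _ j], rule fin)
  next
    case False
    define sl where "sl l = (GREATEST i. i \<le> i0 \<and> length (P i) \<le> l)" for l
    define tl where "tl l = (LEAST i. i0 \<le> i \<and> length (P i) \<le> l)" for l
    have slp: "sl l \<le> i0 \<and> length (P (sl l)) \<le> l" for l
    proof -
      have "0 \<le> i0 \<and> length (P 0) \<le> l" using P0 by simp
      then show ?thesis unfolding sl_def
        by (rule GreatestI_nat[where P="\<lambda>i. i \<le> i0 \<and> length (P i) \<le> l" and b=i0]) simp
    qed
    have slm: "i \<le> sl l" if "i \<le> i0" "length (P i) \<le> l" for i l
    proof -
      have "i \<le> i0 \<and> length (P i) \<le> l" using that by simp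
      then show ?thesis unfolding sl_def
        by (rule Greatest_le_nat[where P="\<lambda>i. i \<le> i0 \<and> length (P i) \<le> l" and b=i0]) simp
    qed
    have tlp: "i0 \<le> tl l \<and> length (P (tl l)) \<le> l" for l
    proof -
      have "i0 \<le> N \<and> length (P N) \<le> l" using PN i0 by simp
      then show ?thesis unfolding tl_def
        by (rule LeastI[where P="\<lambda>i. i0 \<le> i \<and> length (P i) \<le> l"])
    qed
    have tlm: "tl l \<le> i" if "i0 \<le> i" "length (P i) \<le> l" for i l
    proof -
      have "i0 \<le> i \<and> length (P i) \<le> l" using that by simp
      then show ?thesis unfolding tl_def
        by (rule Least_le[where P="\<lambda>i. i0 \<le> i \<and> length (P i) \<le> l"])
    qed
    have tlN: "tl l \<le> N" for l using tlm[of N l] i0 PN by simp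
    have sli0: "sl l < i0" if "l < H" for l
    proof -
      have "sl l \<noteq> i0" using slp[of l] i0 that by auto
      then show ?thesis using slp[of l] by simp
    qed
    have tli0: "i0 < tl l" if "l < H" for l
    proof -
      have "tl l \<noteq> i0" using tlp[of l] i0 that by auto
      then show ?thesis using tlp[of l] by simp
    qed
    have betw: "l < length (P i)" if "sl l < i" "i < tl l" for i l
    proof (rule ccontr)
      assume "\<not> l < length (P i)"
      show False
      proof (cases "i \<le> i0")
        case True
        then have "i \<le> sl l" using slm[of i l] \<open>\<not> l < length (P i)\<close> by simp
        then show False using that by simp
      next
        case False
        then have "tl l \<le> i" using tlm[of i l] \<open>\<not> l < length (P i)\<close> by simp
        then show False using that by simp
      qed
    qed
    have p3: "l + 1 \<le> length (P (sl l)) + C" if "l < H" for l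
    proof -
      have "Suc (sl l) \<le> i0" using sli0[OF that] by simp
      then have "l < length (P (Suc (sl l)))" using betw[of l "Suc (sl l)"] tli0[OF that] by simp
      moreover have "sl l < N" using sli0[OF that] i0 by simp
      ultimately show ?thesis using lenstep[of "sl l"] by simp
    qed
    have p4: "l + 1 \<le> length (P (tl l)) + C" if "l < H" for l
    proof -
      have a: "sl l < tl l - 1" "tl l - 1 < tl l" using sli0[OF that] tli0[OF that] by auto
      then have "l < length (P (tl l - 1))" using betw by blast
      moreover have "tl l - 1 < N" using tlN[of l] a by simp
      moreover have "Suc (tl l - 1) = tl l" using a by simp
      ultimately show ?thesis using lenstep[of "tl l - 1"] by simp
    qed
    have p5: "take (l + 1 - 2*C) (P (sl l + d)) = take (l + 1 - 2*C) (P (sl l))"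
      if "l < H" "sl l + d \<le> tl l" for l d
      using that(2)
    proof (induction d)
      case 0 then show ?case by simp
    next
      case (Suc d)
      define i where "i = sl l + d"
      have iN: "i < N" using Suc.prems tlN[of l] unfolding i_def by simp
      have li: "l + 1 \<le> length (P i) + C"
      proof (cases d)
        case 0 then show ?thesis using p3[OF that(1)] unfolding i_def by simp
      next
        case (Suc e)
        then have "l < length (P i)" using betw[of l i] Suc.prems unfolding i_def by simp
        then show ?thesis by simp
      qed
      obtain k v where kv: "k \<le> C" "P (Suc i) = take (length (P i) - k) (P i) @ v"
        using step iN by blast
      have "take (l + 1 - 2*C) (P (Suc i)) = take (l + 1 - 2*C) (P i)"
        unfolding kv(2) using kv(1) li by (intro take_prefix) auto
      then show ?case using Suc unfolding i_def by simp
    qed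
    define key where "key l = (f (sl l), f (tl l), drop (l + 1 - 2*C) (P (sl l)), drop (l + 1 - 2*C) (P (tl l)))" for l
    define lev where "lev j = j * (C+1)" for j
    have levH: "lev j < H" if "j \<le> KB" for j
    proof -
      have "lev j \<le> B" unfolding lev_def B_def using that by (rule mult_le_mono1)
      then show ?thesis using False by simp
    qed
    have keyin: "\<forall>j\<le>KB. key (lev j) \<in> F \<times> F \<times> W2 \<times> W2"
    proof (intro allI impI)
      fix j assume j: "j \<le> KB"
      define l where "l = lev j"
      have "sl l \<le> N" "tl l \<le> N" using slp[of l] i0 tlN by (auto intro: le_trans)
      moreover have "length (P (sl l)) \<le> l" "length (P (tl l)) \<le> l" using slp tlp by auto
      ultimately have "f (sl l) \<in> F" "f (tl l) \<in> F"
        "length (drop (l + 1 - 2*C) (P (sl l))) \<le> 2*C" "length (drop (l + 1 - 2*C) (P (tl l))) \<le> 2*C"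
        using fF by auto
      then show "key (lev j) \<in> F \<times> F \<times> W2 \<times> W2"
        unfolding key_def W2_def words_def l_def[symmetric] by simp
    qed
    have "card (F \<times> F \<times> W2 \<times> W2) < Suc KB" unfolding KB_def by (simp add: card_cartesian_product)
    moreover have "finite (F \<times> F \<times> W2 \<times> W2)" using finF finite_words unfolding W2_def by simp
    ultimately obtain j j' where jj: "j < j'" "j' \<le> KB" "key (lev j) = key (lev j')"
      using pigeon_nat[of "F \<times> F \<times> W2 \<times> W2" KB "\<lambda>j. key (lev j)"] keyin by blast
    define l where "l = lev j"
    define l' where "l' = lev j'"
    have lH: "l < H" "l' < H" using levH jj unfolding l_def l'_def by auto
    have ll: "l + C < l'"
    proof -
      have "Suc j \<le> j'" using jj by simp
      then have "Suc j * (C+1) \<le> j' * (C+1)" by (rule mult_le_mono1)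
      then show ?thesis unfolding l_def l'_def lev_def by simp
    qed
    define s1 where "s1 = sl l"
    define s2 where "s2 = sl l'"
    define t2 where "t2 = tl l'"
    define t1 where "t1 = tl l"
    have o1: "s1 \<le> s2" unfolding s1_def s2_def using slp[of l] ll by (intro slm) auto
    have o2: "s2 \<le> t2"
    proof -
      have "sl l' \<le> i0" "i0 \<le> tl l'" using slp tlp by auto
      then show ?thesis unfolding s2_def t2_def by (rule le_trans)
    qed
    have o3: "t2 \<le> t1" unfolding t1_def t2_def using tlp[of l] ll by (intro tlm) auto
    have o4: "t1 \<le> N" unfolding t1_def by (rule tlN)
    have o5: "s1 < s2"
    proof -
      have "length (P s1) \<le> l" unfolding s1_def using slp by auto
      moreover have "l' + 1 \<le> length (P s2) + C" unfolding s2_def using p3 lH by auto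
      ultimately have "s1 \<noteq> s2" using ll by auto
      then show ?thesis using o1 by simp
    qed
    have kk: "f s1 = f s2" "f t1 = f t2" "drop (l + 1 - 2*C) (P s1) = drop (l' + 1 - 2*C) (P s2)"
       "drop (l + 1 - 2*C) (P t1) = drop (l' + 1 - 2*C) (P t2)"
      using jj(3) unfolding key_def s1_def s2_def t1_def t2_def l_def l'_def by auto
    have pre1: "take (l + 1 - 2*C) (P t1) = take (l + 1 - 2*C) (P s1)"
      using p5[OF lH(1), of "t1 - s1"] o1 o2 o3 unfolding s1_def t1_def by simp
    have pre2: "take (l' + 1 - 2*C) (P t2) = take (l' + 1 - 2*C) (P s2)"
      using p5[OF lH(2), of "t2 - s2"] o2 unfolding s2_def t2_def by simp
    have dec: "\<exists>u1 u2 v1 v2. P s1 = u1@v1 \<and> P t1 = u1@v2 \<and> P s2 = u2@v1 \<and> P t2 = u2@v2"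
      apply (rule exI[of _ "take (l + 1 - 2*C) (P s1)"])
      apply (rule exI[of _ "take (l' + 1 - 2*C) (P s2)"])
      apply (rule exI[of _ "drop (l + 1 - 2*C) (P s1)"])
      apply (rule exI[of _ "drop (l + 1 - 2*C) (P t1)"])
    proof (intro conjI)
      show "P s1 = take (l + 1 - 2*C) (P s1) @ drop (l + 1 - 2*C) (P s1)" by simp
      show "P t1 = take (l + 1 - 2*C) (P s1) @ drop (l + 1 - 2*C) (P t1)"
        using pre1 by (metis append_take_drop_id)
      show "P s2 = take (l' + 1 - 2*C) (P s2) @ drop (l + 1 - 2*C) (P s1)"
        using kk(3) by (metis append_take_drop_id)
      show "P t2 = take (l' + 1 - 2*C) (P s2) @ drop (l + 1 - 2*C) (P t1)"
        using kk(4) pre2 by (metis append_take_drop_id)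
    qed
    have fin: "s1 \<le> s2 \<and> s2 \<le> t2 \<and> t2 \<le> t1 \<and> t1 \<le> N \<and> (s1 < s2 \<or> t2 < t1) \<and>
      f s1 = f s2 \<and> f t2 = f t1 \<and>
      (\<exists>u1 u2 v1 v2. P s1 = u1@v1 \<and> P t1 = u1@v2 \<and> P s2 = u2@v1 \<and> P t2 = u2@v2)"
      using o1 o2 o3 o4 o5 kk(1,2) dec by simp
    show ?thesis
      by (rule exI[of _ s1], rule exI[of _ s2], rule exI[of _ t2], rule exI[of _ t1], rule fin)
  qed
qed



fun chain :: "nat \<Rightarrow> (nat \<times> 'a option \<times> nat \<times> 'g) list \<Rightarrow> nat \<Rightarrow> bool" where
  "chain p [] q = (p = q)"
| "chain p ((a,s,b,m)#ts) q = (p = a \<and> chain b ts q)"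

fun endst :: "nat \<Rightarrow> (nat \<times> 'a option \<times> nat \<times> 'g) list \<Rightarrow> nat" where
  "endst p [] = p"
| "endst p ((a,s,b,m)#ts) = endst b ts"

lemma chain_append: "chain p (xs @ ys) q \<longleftrightarrow> (\<exists>r. chain p xs r \<and> chain r ys q)"
  by (induction p xs q rule: chain.induct) auto

lemma chain_endst: "chain p xs q \<Longrightarrow> q = endst p xs"
  by (induction p xs q rule: chain.induct) auto

lemma endst_in: "set ts \<subseteq> D \<Longrightarrow> p \<in> Q \<Longrightarrow> (\<forall>(a,s,b,m)\<in>D. b \<in> Q) \<Longrightarrow> endst p ts \<in> Q"
  by (induction p ts rule: endst.induct) auto

definition lab :: "'a option \<Rightarrow> 'a list" where
  "lab s = (case s of None \<Rightarrow> [] | Some a \<Rightarrow> [a])"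

fun wd :: "(nat \<times> 'a option \<times> nat \<times> 'g) list \<Rightarrow> 'a list" where
  "wd [] = []"
| "wd ((a,s,b,m)#ts) = lab s @ wd ts"

lemma wd_append: "wd (xs @ ys) = wd xs @ wd ys"
  by (induction xs rule: wd.induct) auto

lemma wd_len: "length (wd ts) \<le> length ts"
  by (induction ts rule: wd.induct) (auto simp add: lab_def split: option.splits)

fun pr :: "(nat \<times> 'a option \<times> nat \<times> ('r::comm_ring_1 \<times> 'r \<times> 'r \<times> 'r)) list \<Rightarrow> ('r \<times> 'r \<times> 'r \<times> 'r)" where
  "pr [] = I"
| "pr ((a,s,b,m)#ts) = mm m (pr ts)"

lemma pr_append: "pr (xs @ ys) = mm (pr xs) (pr ys)"
  by (induction xs rule: pr.induct) (auto simp add: mm_assoc)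

lemma det_pr: "\<forall>(a,s,b,m)\<in>set ts. det m = 1 \<Longrightarrow> det (pr ts) = 1"
  by (induction ts rule: pr.induct) (auto simp add: det_mm)

lemma reach_run:
  "(q, w, x) \<in> gaut_reach (SL2 :: ('r::comm_ring_1 \<times> 'r \<times> 'r \<times> 'r) monoid) D q0 \<Longrightarrow>
   \<exists>ts. set ts \<subseteq> D \<and> chain q0 ts q \<and> wd ts = w \<and> x = pr ts"
proof (induction rule: gaut_reach.induct)
  case init
  then show ?case by (intro exI[of _ "[]"]) (simp add: one_SL2)
next
  case (step q w x s q' m)
  then obtain ts where ts: "set ts \<subseteq> D" "chain q0 ts q" "wd ts = w" "x = pr ts" by blast
  show ?case
    using ts step
    by (intro exI[of _ "ts @ [(q,s,q',m)]"])
       (auto simp add: chain_append wd_append pr_append mult_SL2 lab_def split: option.splits)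
qed

lemma run_reach:
  "set ts \<subseteq> D \<Longrightarrow> chain q0 ts q \<Longrightarrow>
   (q, wd ts, pr ts) \<in> gaut_reach (SL2 :: ('r::comm_ring_1 \<times> 'r \<times> 'r \<times> 'r) monoid) D q0"
proof (induction ts arbitrary: q rule: rev_induct)
  case Nil
  have "(q0, [], \<one>\<^bsub>(SL2 :: ('r \<times> 'r \<times> 'r \<times> 'r) monoid)\<^esub>) \<in> gaut_reach (SL2 :: ('r \<times> 'r \<times> 'r \<times> 'r) monoid) D q0"
    by (rule gaut_reach.init)
  then show ?case using Nil by (simp add: one_SL2)
next
  case (snoc t ts)
  obtain a s b m where t: "t = (a,s,b,m)" by (cases t)
  obtain r where r: "chain q0 ts r" "chain r [t] q" using snoc.prems chain_append by blast
  have ra: "r = a" "b = q" using r(2) t by auto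
  have "(r, wd ts, pr ts) \<in> gaut_reach (SL2 :: ('r \<times> 'r \<times> 'r \<times> 'r) monoid) D q0"
    using snoc r by auto
  from gaut_reach.step[OF this, of s b m] snoc.prems(1) t ra
  show ?case by (simp add: wd_append pr_append mult_SL2 lab_def split: option.splits)
qed

definition Lw :: "nat \<Rightarrow> nat list" where
  "Lw n = replicate n 0 @ replicate n 1 @ replicate n 2"

lemma count_rep: "count_list (replicate n y) x = (if y = x then n else 0)"
  by (induction n) auto

lemma Lw_count: "x \<in> {0,1,2} \<Longrightarrow> count_list (Lw n) x = n"
  by (auto simp add: Lw_def count_rep)

lemma Lw_set: "set (Lw n) \<subseteq> {0,1,2}"
  by (auto simp add: Lw_def)

lemma Lw_sorted: "sorted (Lw n)"
  by (auto simp add: Lw_def sorted_append)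

lemma word_lemma:
  assumes "A@B@Cc@D@E \<in> range Lw" "A@Cc@E \<in> range Lw" "A@B@B@Cc@D@D@E \<in> range Lw" "B@D \<noteq> []"
  shows False
proof -
  obtain n1 n0 n2 where n: "A@B@Cc@D@E = Lw n1" "A@Cc@E = Lw n0" "A@B@B@Cc@D@D@E = Lw n2"
    using assms by auto
  have cnt: "count_list (B@D) x = n1 - n0" if "x \<in> {0,1,2}" for x
  proof -
    have "count_list (A@B@Cc@D@E) x = n1" "count_list (A@Cc@E) x = n0"
      using n Lw_count that by auto
    then show ?thesis by simp
  qed
  have "set (B@D) \<subseteq> set (Lw n1)" using n(1)[symmetric] by auto
  then have st: "set (B@D) \<subseteq> {0,1,2}" using Lw_set[of n1] by blast
  obtain y where y: "y \<in> set (B@D)" using assms(4) by (cases "B@D") auto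
  then have "y \<in> {0,1,2}" using st by auto
  then have "count_list (B@D) y > 0" using y count_list_0_iff by (metis gr0I)
  then have pos: "n1 - n0 > 0" using cnt[OF \<open>y \<in> {0,1,2}\<close>] by linarith
  have all: "x \<in> set B \<or> x \<in> set D" if "x \<in> {0,1,2}" for x
    using cnt[OF that] pos count_list_0_iff[of "B@D" x] by auto
  have so: "sorted (A@B@B@Cc@D@D@E)" using n(3) Lw_sorted by simp
  have sB: "\<forall>x\<in>set B. \<forall>y\<in>set B. x \<le> y" and sD: "\<forall>x\<in>set D. \<forall>y\<in>set D. x \<le> y"
    using so by (auto simp add: sorted_append)
  have eB: "x = y" if "x \<in> set B" "y \<in> set B" for x y using sB that by (meson antisym)
  have eD: "x = y" if "x \<in> set D" "y \<in> set D" for x y using sD that by (meson antisym)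
  have "(0::nat) \<in> set B \<or> 0 \<in> set D" "(1::nat) \<in> set B \<or> 1 \<in> set D" "(2::nat) \<in> set B \<or> 2 \<in> set D"
    using all by auto
  then show False using eB eD by (metis one_neq_zero zero_neq_numeral numeral_One num.distinct(1) numeral_eq_iff)
qed



definition sg :: "bool \<Rightarrow> int \<times> int \<times> int \<times> int \<Rightarrow> int \<times> int \<times> int \<times> int" where
  "sg b x = (if b then x else neg x)"

lemma minv_neg: "minv (neg x) = neg (minv x)" by (cases x) simp
lemma minv_mm: "minv (mm x y) = mm (minv y) (minv x)"
  by (cases x; cases y) (simp add: algebra_simps)

lemma keylemma:
  "mm (minv (sg b (ev (u@v1)))) (sg c (ev (u@v2))) = sg (b = c) (mm (minv (ev v1)) (ev v2))"
proof -
  have "mm (minv (ev (u@v1))) (ev (u@v2)) = mm (minv (ev v1)) (ev v2)"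
    by (simp add: ev_append minv_mm mm_assoc minv_l[OF det_ev] mm_assoc[symmetric])
  then show ?thesis by (cases b; cases c) (simp_all add: sg_def minv_neg)
qed

lemma det_pr_sub: "set ts \<subseteq> D \<Longrightarrow> \<forall>(a,s,b,m)\<in>D. det m = 1 \<Longrightarrow> det (pr ts) = 1"
  by (induction ts rule: pr.induct) (auto simp add: det_mm)

lemma chain_det: "chain p xs q \<Longrightarrow> chain p xs q' \<Longrightarrow> q = q'"
  using chain_endst by metis

lemma chain_E: "chain p (xs@ys) q \<Longrightarrow> \<exists>r. chain p xs r \<and> chain r ys q"
  using chain_append by blast

lemma chain_I: "chain p xs r \<Longrightarrow> chain r ys q \<Longrightarrow> chain p (xs@ys) q"
  using chain_append by blast

lemma pump_run:
  assumes ts: "ts = a@b@c@d@e" and ch: "chain q0 ts qf"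
    and c1: "chain q0 a r1" and c2: "chain q0 (a@b) r1"
    and c3: "chain q0 (a@b@c) r3" and c4: "chain q0 (a@b@c@d) r3"
    and H: "mm (pr b) (mm (pr c) (pr d)) = pr c"
  shows "chain q0 (a@c@e) qf \<and> pr (a@c@e) = pr ts \<and> chain q0 (a@b@b@c@d@d@e) qf \<and> pr (a@b@b@c@d@d@e) = pr ts"
proof -
  obtain x1 where x1: "chain q0 a x1" "chain x1 (b@c@d@e) qf" using ch ts chain_E by blast
  obtain x2 where x2: "chain x1 b x2" "chain x2 (c@d@e) qf" using x1(2) chain_E by blast
  obtain x3 where x3: "chain x2 c x3" "chain x3 (d@e) qf" using x2(2) chain_E by blast
  obtain x4 where x4: "chain x3 d x4" "chain x4 e qf" using x3(2) chain_E by blast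
  have e1: "x1 = r1" using chain_det[OF x1(1) c1] .
  have "chain q0 (a@b) x2" using chain_I[OF x1(1) x2(1)] .
  then have e2: "x2 = r1" using chain_det c2 by blast
  have "chain q0 ((a@b)@c) x3" using chain_I[OF chain_I[OF x1(1) x2(1)] x3(1)] .
  then have e3: "x3 = r3" using chain_det c3 by (metis append_assoc)
  have "chain q0 (((a@b)@c)@d) x4" using chain_I[OF chain_I[OF chain_I[OF x1(1) x2(1)] x3(1)] x4(1)] .
  then have e4: "x4 = r3" using chain_det c4 by (metis append_assoc)
  have y: "chain q0 a r1" "chain r1 b r1" "chain r1 c r3" "chain r3 d r3" "chain r3 e qf"
    using x1 x2 x3 x4 e1 e2 e3 e4 by auto
  have "chain q0 (a@c@e) qf" using chain_I[OF y(1) chain_I[OF y(3) y(5)]] .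
  moreover have "chain q0 (a@b@b@c@d@d@e) qf"
    using chain_I[OF y(1) chain_I[OF y(2) chain_I[OF y(2) chain_I[OF y(3) chain_I[OF y(4) chain_I[OF y(4) y(5)]]]]]] .
  moreover have "pr (a@c@e) = pr ts"
  proof -
    have "pr ts = mm (pr a) (mm (mm (pr b) (mm (pr c) (pr d))) (pr e))"
      unfolding ts by (simp only: pr_append mm_assoc)
    also have "\<dots> = pr (a@c@e)" unfolding H by (simp only: pr_append)
    finally show ?thesis by simp
  qed
  moreover have "pr (a@b@b@c@d@d@e) = pr ts"
  proof -
    have "pr (a@b@b@c@d@d@e) = mm (pr a) (mm (pr b) (mm (mm (pr b) (mm (pr c) (pr d))) (mm (pr d) (pr e))))"
      by (simp only: pr_append mm_assoc)
    also have "\<dots> = mm (pr a) (mm (pr b) (mm (pr c) (mm (pr d) (pr e))))" unfolding H ..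
    also have "\<dots> = pr ts" unfolding ts by (simp only: pr_append)
    finally show ?thesis .
  qed
  ultimately show ?thesis by blast
qed

lemma split5:
  assumes "s1 \<le> s2" "s2 \<le> t2" "t2 \<le> t1"
  shows "take s2 ts = take s1 ts @ take (s2 - s1) (drop s1 ts)"
    "take t2 ts = take s2 ts @ take (t2 - s2) (drop s2 ts)"
    "take t1 ts = take t2 ts @ take (t1 - t2) (drop t2 ts)"
proof -
  have "s2 = s1 + (s2 - s1)" "t2 = s2 + (t2 - s2)" "t1 = t2 + (t1 - t2)" using assms by auto
  then show "take s2 ts = take s1 ts @ take (s2 - s1) (drop s1 ts)"
    "take t2 ts = take s2 ts @ take (t2 - s2) (drop s2 ts)"
    "take t1 ts = take t2 ts @ take (t1 - t2) (drop t2 ts)"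
    by (metis take_add)+
qed

theorem notZ: "range Lw \<notin> lang_class (SL2 :: (int \<times> int \<times> int \<times> int) monoid) {0,1,2::nat}"
proof
  assume "range Lw \<in> lang_class (SL2 :: (int \<times> int \<times> int \<times> int) monoid) {0,1,2::nat}"
  then obtain Q D q0 Qa where g: "is_gaut (SL2 :: (int \<times> int \<times> int \<times> int) monoid) {0,1,2::nat} Q D q0 Qa"
    and L: "range Lw = gaut_lang (SL2 :: (int \<times> int \<times> int \<times> int) monoid) D q0 Qa"
    unfolding lang_class_def by blast
  have finQ: "finite Q" and q0Q: "q0 \<in> Q" and DQ: "\<forall>(a,s,b,m)\<in>D. b \<in> Q"
    and Ddet: "\<forall>(a,s,b,m)\<in>D. det m = 1" and finD: "finite D"
    using g unfolding is_gaut_def by (auto simp add: carrier_SL2)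
  define mat :: "nat \<times> nat option \<times> nat \<times> (int \<times> int \<times> int \<times> int) \<Rightarrow> _" where "mat t = snd (snd (snd t))" for t
  have matdet: "t \<in> D \<Longrightarrow> det (mat t) = 1" for t using Ddet unfolding mat_def by auto
  define uw where "uw m = (SOME u. pm m (ev u))" for m
  have uw_ok: "det m = 1 \<Longrightarrow> pm m (ev (uw m))" for m
    unfolding uw_def by (rule someI_ex[OF ex_word])
  define C where "C = Max (insert 0 ((\<lambda>t. length (uw (mat t))) ` D))"
  have C_ge: "t \<in> D \<Longrightarrow> length (uw (mat t)) \<le> C" for t
    unfolding C_def using finD by (intro Max_ge) auto
  define F where "F = Q \<times> (UNIV :: bool set)"
  have finF: "finite F" unfolding F_def using finQ by simp
  define Bd where "Bd = card F * card (words (card F * card F * card (words (2*C)) * card (words (2*C)) * (C+1)))"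
  define n where "n = Suc Bd"
  have "Lw n \<in> gaut_lang (SL2 :: (int \<times> int \<times> int \<times> int) monoid) D q0 Qa" using L by auto
  then obtain q where q: "q \<in> Qa" "(q, Lw n, I) \<in> gaut_reach (SL2 :: (int \<times> int \<times> int \<times> int) monoid) D q0"
    unfolding gaut_lang_def by (auto simp add: one_SL2)
  define Rs where "Rs = {ts. set ts \<subseteq> D \<and> (\<exists>q\<in>Qa. chain q0 ts q) \<and> wd ts = Lw n \<and> pr ts = (I :: int \<times> int \<times> int \<times> int)}"
  obtain ts0 where "ts0 \<in> Rs" using reach_run[OF q(2)] q(1) unfolding Rs_def by fastforce
  then obtain ts where tsR: "ts \<in> Rs" and tsmin: "\<forall>ts'. ts' \<in> Rs \<longrightarrow> length ts \<le> length ts'"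
    using ex_has_least_nat[of "\<lambda>ts. ts \<in> Rs" ts0 length] by blast
  obtain qf where ts: "set ts \<subseteq> D" "qf \<in> Qa" "chain q0 ts qf" "wd ts = Lw n" "pr ts = I"
    using tsR unfolding Rs_def by blast
  define N where "N = length ts"
  have "length (Lw n) = 3*n" by (simp add: Lw_def)
  then have Nbig: "3*n \<le> N" using wd_len[of ts] ts(4) unfolding N_def by simp
  define gm where "gm i = pr (take i ts)" for i
  define st where "st i = endst q0 (take i ts)" for i
  have settake: "set (take i ts) \<subseteq> D" for i by (rule order_trans[OF set_take_subset ts(1)])
  have gdet: "det (gm i) = 1" for i
    unfolding gm_def by (rule det_pr_sub[OF settake Ddet])
  define P where "P i = (SOME w. alt w \<and> pm (gm i) (ev w))" for i
  have Pok: "alt (P i) \<and> pm (gm i) (ev (P i))" for i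
    unfolding P_def by (rule someI_ex[OF ex_nf[OF gdet[of i]]])
  define E where "E i = (gm i = ev (P i))" for i
  have gE: "gm i = sg (E i) (ev (P i))" for i
    using Pok[of i] unfolding E_def sg_def pm_def by (cases "gm i = ev (P i)") simp_all
  have Pid: "gm i = I \<Longrightarrow> P i = []" for i
  proof -
    assume g1: "gm i = I"
    have "pm (gm i) (ev (P i))" using Pok[of i] by blast
    then have "pm (ev (P i)) (ev [])" using g1 pm_sym by simp
    moreover have "alt (P i)" using Pok[of i] by blast
    moreover have "alt []" by simp
    ultimately show "P i = []" using uniq by blast
  qed
  have P0: "P 0 = []" using Pid unfolding gm_def by simp
  have PN: "P N = []" using Pid ts(5) unfolding gm_def N_def by simp
  have step: "\<forall>i<N. \<exists>k v. k \<le> C \<and> length v \<le> C \<and> P (Suc i) = take (length (P i) - k) (P i) @ v"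
  proof (intro allI impI)
    fix i assume iN: "i < N"
    define t where "t = ts ! i"
    have tD: "t \<in> D" using iN ts(1) unfolding t_def N_def by auto
    have tk: "take (Suc i) ts = take i ts @ [t]" using iN unfolding t_def N_def by (simp add: take_Suc_conv_app_nth)
    have "pr [t] = mat t" unfolding mat_def by (cases t) auto
    then have gs: "gm (Suc i) = mm (gm i) (mat t)" unfolding gm_def tk by (simp add: pr_append)
    have "pm (gm (Suc i)) (mm (ev (P i)) (ev (uw (mat t))))"
      unfolding gs using pm_mm Pok uw_ok[OF matdet[OF tD]] by blast
    then have p1: "pm (gm (Suc i)) (ev (P i @ uw (mat t)))" by (simp add: ev_append)
    obtain k v where kv: "k \<le> length (uw (mat t))" "length v \<le> length (uw (mat t))"
      "alt (take (length (P i) - k) (P i) @ v)"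
      "pm (ev (P i @ uw (mat t))) (ev (take (length (P i) - k) (P i) @ v))"
      using app_word[of "P i" "uw (mat t)"] Pok by blast
    have "pm (ev (P (Suc i))) (ev (take (length (P i) - k) (P i) @ v))"
      using p1 kv(4) Pok[of "Suc i"] by (meson pm_sym pm_trans)
    then have "P (Suc i) = take (length (P i) - k) (P i) @ v" using uniq kv(3) Pok by blast
    then show "\<exists>k v. k \<le> C \<and> length v \<le> C \<and> P (Suc i) = take (length (P i) - k) (P i) @ v"
      using kv(1,2) C_ge[OF tD] by (intro exI[of _ k] exI[of _ v]) auto
  qed
  define f where "f i = (st i, E i)" for i
  have fF: "\<forall>i\<le>N. f i \<in> F"
    unfolding f_def F_def st_def using endst_in[OF settake q0Q DQ] by auto
  have big: "card F * card (words (card F * card F * card (words (2*C)) * card (words (2*C)) * (C+1))) < Suc N"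
    using Nbig unfolding Bd_def[symmetric] n_def by simp
  obtain s1 s2 t2 t1 where o: "s1 \<le> s2" "s2 \<le> t2" "t2 \<le> t1" "t1 \<le> N" "s1 < s2 \<or> t2 < t1"
    "f s1 = f s2" "f t2 = f t1"
    and dec: "\<exists>u1 u2 v1 v2. P s1 = u1@v1 \<and> P t1 = u1@v2 \<and> P s2 = u2@v1 \<and> P t2 = u2@v2"
    using core[OF finF fF P0 PN step big] by blast
  have key: "mm (minv (gm s1)) (gm t1) = mm (minv (gm s2)) (gm t2)"
  proof -
    obtain u1 u2 v1 v2 where u: "P s1 = u1@v1" "P t1 = u1@v2" "P s2 = u2@v1" "P t2 = u2@v2"
      using dec by blast
    have "E s1 = E s2" "E t1 = E t2" using o(6,7) unfolding f_def by auto
    moreover have "mm (minv (gm s1)) (gm t1) = sg (E s1 = E t1) (mm (minv (ev v1)) (ev v2))"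
      unfolding gE[of s1] gE[of t1] u(1,2) by (rule keylemma)
    moreover have "mm (minv (gm s2)) (gm t2) = sg (E s2 = E t2) (mm (minv (ev v1)) (ev v2))"
      unfolding gE[of s2] gE[of t2] u(3,4) by (rule keylemma)
    ultimately show ?thesis by simp
  qed
  define a where "a = take s1 ts"
  define b where "b = take (s2 - s1) (drop s1 ts)"
  define c where "c = take (t2 - s2) (drop s2 ts)"
  define d where "d = take (t1 - t2) (drop t2 ts)"
  define e where "e = drop t1 ts"
  have sp: "take s2 ts = a@b" "take t2 ts = a@b@c" "take t1 ts = a@b@c@d"
    using split5[OF o(1,2,3), of ts] unfolding a_def b_def c_def d_def by auto
  have tsd: "ts = a@b@c@d@e" using sp(3) unfolding e_def by (metis append_take_drop_id append.assoc)
  have dets: "det (pr a) = 1" "det (pr b) = 1" "det (pr c) = 1" "det (pr d) = 1"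
    using ts(1) Ddet unfolding tsd by (auto intro!: det_pr)
  have gs: "gm s1 = pr a" "gm s2 = mm (pr a) (pr b)" "gm t2 = mm (mm (pr a) (pr b)) (pr c)"
    "gm t1 = mm (mm (mm (pr a) (pr b)) (pr c)) (pr d)"
    unfolding gm_def a_def[symmetric] sp by (simp_all add: pr_append mm_assoc)
  have H: "mm (pr b) (mm (pr c) (pr d)) = pr c"
  proof -
    have "gm t1 = mm (pr a) (mm (pr b) (mm (pr c) (pr d)))" unfolding gs by (simp only: mm_assoc)
    then have "mm (minv (gm s1)) (gm t1) = mm (mm (minv (pr a)) (pr a)) (mm (pr b) (mm (pr c) (pr d)))"
      unfolding gs(1) by (simp only: mm_assoc)
    then have "mm (minv (gm s1)) (gm t1) = mm (pr b) (mm (pr c) (pr d))"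
      by (simp only: minv_l[OF dets(1)] mm_I1)
    moreover have "mm (minv (gm s2)) (gm t2) = pr c"
    proof -
      have dX: "det (mm (pr a) (pr b)) = 1" using dets by (simp add: det_mm)
      have "mm (minv (gm s2)) (gm t2) = mm (mm (minv (mm (pr a) (pr b))) (mm (pr a) (pr b))) (pr c)"
        unfolding gs by (rule mm_assoc[symmetric])
      then show ?thesis by (simp only: minv_l[OF dX] mm_I1)
    qed
    ultimately show ?thesis using key by simp
  qed
  have stc: "chain q0 (take i ts) (st i)" if "i \<le> N" for i
  proof -
    obtain r where "chain q0 (take i ts) r" using ts(3) chain_append[of q0 "take i ts" "drop i ts" qf] by auto
    then show ?thesis unfolding st_def using chain_endst by metis
  qed
  have sts: "st s1 = st s2" "st t2 = st t1" using o(6,7) unfolding f_def by auto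
  have pumped: "chain q0 (a@c@e) qf \<and> pr (a@c@e) = pr ts \<and> chain q0 (a@b@b@c@d@d@e) qf \<and> pr (a@b@b@c@d@d@e) = pr ts"
  proof (rule pump_run[OF tsd ts(3), of "st s1" "st t2"])
    show "chain q0 a (st s1)" using stc[of s1] o unfolding a_def by simp
    show "chain q0 (a@b) (st s1)" using stc[of s2] o sp sts by simp
    show "chain q0 (a@b@c) (st t2)" using stc[of t2] o sp by simp
    show "chain q0 (a@b@c@d) (st t2)" using stc[of t1] o sp sts by simp
    show "mm (pr b) (mm (pr c) (pr d)) = pr c" by (rule H)
  qed
  have acc: "wd xs \<in> range Lw" if "set xs \<subseteq> D" "chain q0 xs qf" "pr xs = pr ts" for xs
  proof -
    have "(qf, wd xs, pr xs) \<in> gaut_reach (SL2 :: (int \<times> int \<times> int \<times> int) monoid) D q0"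
      using run_reach that by blast
    then show ?thesis using L ts(2,5) that(3) unfolding gaut_lang_def by (auto simp add: one_SL2)
  qed
  have sets: "set (a@c@e) \<subseteq> D" "set (a@b@b@c@d@d@e) \<subseteq> D" using ts(1) unfolding tsd by auto
  have w0: "wd a @ wd c @ wd e \<in> range Lw" using acc[OF sets(1)] pumped by (simp add: wd_append)
  have w2: "wd a @ wd b @ wd b @ wd c @ wd d @ wd d @ wd e \<in> range Lw"
    using acc[OF sets(2)] pumped by (simp add: wd_append)
  have w1: "wd a @ wd b @ wd c @ wd d @ wd e \<in> range Lw" using ts(4) unfolding tsd by (simp add: wd_append)
  show False
  proof (cases "wd b @ wd d = []")
    case True
    have lb: "length b = s2 - s1" "length d = t1 - t2" using o unfolding b_def d_def N_def by auto
    have "a@c@e \<in> Rs"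
      using sets(1) pumped ts True unfolding Rs_def tsd by (auto simp add: wd_append)
    then have "length ts \<le> length (a@c@e)" using tsmin by blast
    then show False using lb o(5) unfolding tsd by auto
  next
    case False
    then show False using word_lemma[OF w1 w0 w2] by blast
  qed
qed



fun phi :: "int \<times> int \<times> int \<times> int \<Rightarrow> rat \<times> rat \<times> rat \<times> rat" where
  "phi (a,b,c,d) = (of_int a, of_int b, of_int c, of_int d)"

lemma phi_mm: "phi (mm x y) = mm (phi x) (phi y)" by (cases x; cases y) simp
lemma phi_inj: "phi x = phi y \<Longrightarrow> x = y" by (cases x; cases y) simp
lemma phi_det: "det (phi x) = of_int (det x)" by (cases x) simp
lemma phi_I: "phi I = I" by simp

definition tQ :: "nat \<times> 'a option \<times> nat \<times> (int \<times> int \<times> int \<times> int) \<Rightarrow> nat \<times> 'a option \<times> nat \<times> (rat \<times> rat \<times> rat \<times> rat)" where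
  "tQ t = (case t of (q,s,q',m) \<Rightarrow> (q,s,q',phi m))"

lemma reachZQ: "(q,w,x) \<in> gaut_reach (SL2 :: (int \<times> int \<times> int \<times> int) monoid) D q0 \<Longrightarrow>
  (q,w,phi x) \<in> gaut_reach (SL2 :: (rat \<times> rat \<times> rat \<times> rat) monoid) (tQ ` D) q0"
proof (induction rule: gaut_reach.induct)
  case init
  have "(q0, [], \<one>\<^bsub>(SL2 :: (rat \<times> rat \<times> rat \<times> rat) monoid)\<^esub>) \<in> gaut_reach (SL2 :: (rat \<times> rat \<times> rat \<times> rat) monoid) (tQ ` D) q0"
    by (rule gaut_reach.init)
  then show ?case by (simp add: one_SL2)
next
  case (step q w x s q' m)
  have "(q, s, q', phi m) \<in> tQ ` D" using step.hyps(2) unfolding tQ_def by force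
  from gaut_reach.step[OF step.IH this]
  show ?case by (simp add: mult_SL2 phi_mm)
qed

lemma reachQZ: "(q,w,y) \<in> gaut_reach (SL2 :: (rat \<times> rat \<times> rat \<times> rat) monoid) (tQ ` D) q0 \<Longrightarrow>
  \<exists>x. y = phi x \<and> (q,w,x) \<in> gaut_reach (SL2 :: (int \<times> int \<times> int \<times> int) monoid) D q0"
proof (induction rule: gaut_reach.induct)
  case init
  have "(q0, [], \<one>\<^bsub>(SL2 :: (int \<times> int \<times> int \<times> int) monoid)\<^esub>) \<in> gaut_reach (SL2 :: (int \<times> int \<times> int \<times> int) monoid) D q0"
    by (rule gaut_reach.init)
  then show ?case by (intro exI[of _ I]) (simp add: one_SL2)
next
  case (step q w y s q' m')
  obtain x where x: "y = phi x" "(q,w,x) \<in> gaut_reach (SL2 :: (int \<times> int \<times> int \<times> int) monoid) D q0"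
    using step.IH by blast
  obtain m where m: "(q,s,q',m) \<in> D" "m' = phi m" using step.hyps(2) unfolding tQ_def by force
  from gaut_reach.step[OF x(2) m(1)]
  show ?case using x m by (intro exI[of _ "mm x m"]) (simp add: mult_SL2 phi_mm)
qed

lemma part1: "lang_class (SL2 :: (int \<times> int \<times> int \<times> int) monoid) \<Sigma> \<subseteq> lang_class (SL2 :: (rat \<times> rat \<times> rat \<times> rat) monoid) \<Sigma>"
proof
  fix L assume "L \<in> lang_class (SL2 :: (int \<times> int \<times> int \<times> int) monoid) \<Sigma>"
  then obtain Q D q0 Qa where g: "is_gaut (SL2 :: (int \<times> int \<times> int \<times> int) monoid) \<Sigma> Q D q0 Qa"
    and L: "L = gaut_lang (SL2 :: (int \<times> int \<times> int \<times> int) monoid) D q0 Qa"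
    unfolding lang_class_def by blast
  have gZ: "finite \<Sigma>" "finite Q" "q0 \<in> Q" "Qa \<subseteq> Q" "finite D"
    "\<forall>(q,s,q',m)\<in>D. q \<in> Q \<and> q' \<in> Q \<and> set_option s \<subseteq> \<Sigma> \<and> m \<in> carrier (SL2 :: (int \<times> int \<times> int \<times> int) monoid)"
    using g unfolding is_gaut_def by blast+
  have tr: "\<forall>(q,s,q',m)\<in>tQ ` D. q \<in> Q \<and> q' \<in> Q \<and> set_option s \<subseteq> \<Sigma> \<and> m \<in> carrier (SL2 :: (rat \<times> rat \<times> rat \<times> rat) monoid)"
  proof
    fix t assume "t \<in> tQ ` D"
    then obtain q s q' m where t: "t = (q,s,q',phi m)" "(q,s,q',m) \<in> D" unfolding tQ_def by force
    then have "q \<in> Q \<and> q' \<in> Q \<and> set_option s \<subseteq> \<Sigma> \<and> det m = 1" using gZ(6) by (auto simp add: carrier_SL2)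
    then show "case t of (q,s,q',m) \<Rightarrow> q \<in> Q \<and> q' \<in> Q \<and> set_option s \<subseteq> \<Sigma> \<and> m \<in> carrier (SL2 :: (rat \<times> rat \<times> rat \<times> rat) monoid)"
      using t by (simp add: carrier_SL2 phi_det)
  qed
  have g': "is_gaut (SL2 :: (rat \<times> rat \<times> rat \<times> rat) monoid) \<Sigma> Q (tQ ` D) q0 Qa"
    unfolding is_gaut_def using gZ tr by blast
  have "L = gaut_lang (SL2 :: (rat \<times> rat \<times> rat \<times> rat) monoid) (tQ ` D) q0 Qa"
  proof
    show "L \<subseteq> gaut_lang (SL2 :: (rat \<times> rat \<times> rat \<times> rat) monoid) (tQ ` D) q0 Qa"
    proof
      fix w assume "w \<in> L"
      then obtain q where q: "q \<in> Qa" "(q, w, I) \<in> gaut_reach (SL2 :: (int \<times> int \<times> int \<times> int) monoid) D q0"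
        unfolding L gaut_lang_def by (auto simp add: one_SL2)
      have "(q, w, phi I) \<in> gaut_reach (SL2 :: (rat \<times> rat \<times> rat \<times> rat) monoid) (tQ ` D) q0"
        by (rule reachZQ[OF q(2)])
      then show "w \<in> gaut_lang (SL2 :: (rat \<times> rat \<times> rat \<times> rat) monoid) (tQ ` D) q0 Qa"
        unfolding gaut_lang_def using q(1) by (auto simp add: one_SL2)
    qed
  next
    show "gaut_lang (SL2 :: (rat \<times> rat \<times> rat \<times> rat) monoid) (tQ ` D) q0 Qa \<subseteq> L"
    proof
      fix w assume "w \<in> gaut_lang (SL2 :: (rat \<times> rat \<times> rat \<times> rat) monoid) (tQ ` D) q0 Qa"
      then obtain q where q: "q \<in> Qa" "(q, w, I) \<in> gaut_reach (SL2 :: (rat \<times> rat \<times> rat \<times> rat) monoid) (tQ ` D) q0"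
        unfolding gaut_lang_def by (auto simp add: one_SL2)
      obtain x where "I = phi x" "(q,w,x) \<in> gaut_reach (SL2 :: (int \<times> int \<times> int \<times> int) monoid) D q0"
        using reachQZ[OF q(2)] by blast
      moreover have "x = I" using calculation(1) phi_I phi_inj by metis
      ultimately show "w \<in> L" unfolding L gaut_lang_def using q(1) by (auto simp add: one_SL2)
    qed
  qed
  then show "L \<in> lang_class (SL2 :: (rat \<times> rat \<times> rat \<times> rat) monoid) \<Sigma>"
    unfolding lang_class_def using g' by blast
qed

definition dg :: "rat \<Rightarrow> rat \<times> rat \<times> rat \<times> rat" where "dg r = (r, 0, 0, 1/r)"

lemma dg_mm: "r \<noteq> 0 \<Longrightarrow> s \<noteq> 0 \<Longrightarrow> mm (dg r) (dg s) = dg (r*s)"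
  by (simp add: dg_def)

lemma dg_fst: "fst (dg r) = r" by (simp add: dg_def)

lemma dg_1: "dg 1 = I" by (simp add: dg_def)

definition DA :: "(nat \<times> nat option \<times> nat \<times> (rat \<times> rat \<times> rat \<times> rat)) set" where
  "DA = {(0, Some 0, 0, dg 2), (0, None, 1, I), (1, Some 1, 1, dg 3), (1, None, 2, I), (2, Some 2, 2, dg (1/6))}"

lemma reachA: "(q,w,x) \<in> gaut_reach (SL2 :: (rat \<times> rat \<times> rat \<times> rat) monoid) DA 0 \<Longrightarrow>
  (q = 0 \<and> (\<exists>i. w = replicate i 0 \<and> x = dg (2^i))) \<or>
  (q = 1 \<and> (\<exists>i j. w = replicate i 0 @ replicate j 1 \<and> x = dg (2^i * 3^j))) \<or>
  (q = 2 \<and> (\<exists>i j k. w = replicate i 0 @ replicate j 1 @ replicate k 2 \<and> x = dg (2^i * 3^j / 6^k)))"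
proof (induction rule: gaut_reach.induct)
  case init
  then show ?case by (auto simp add: one_SL2 dg_1[symmetric] intro: exI[of _ 0])
next
  case (step q w x s q' m)
  have tr: "(q,s,q',m) \<in> DA" by fact
  let ?w = "w @ (case s of None \<Rightarrow> [] | Some a \<Rightarrow> [a])"
  let ?x = "x \<otimes>\<^bsub>(SL2 :: (rat \<times> rat \<times> rat \<times> rat) monoid)\<^esub> m"
  from step.IH show ?case
  proof (elim disjE conjE exE)
    fix i assume a: "q = 0" "w = replicate i 0" "x = dg (2^i)"
    from tr a have "(s = Some 0 \<and> q' = 0 \<and> m = dg 2) \<or> (s = None \<and> q' = 1 \<and> m = I)"
      unfolding DA_def by auto
    then show ?thesis
    proof
      assume b: "s = Some 0 \<and> q' = 0 \<and> m = dg 2"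
      have "?w = replicate (Suc i) 0" using a b by (simp add: replicate_append_same)
      moreover have "?x = dg (2^Suc i)" using a b by (simp add: mult_SL2 dg_mm mult_ac)
      ultimately show ?thesis using b by blast
    next
      assume b: "s = None \<and> q' = 1 \<and> m = I"
      have "?w = replicate i 0 @ replicate 0 1" using a b by simp
      moreover have "?x = dg (2^i * 3^0)" using a b by (simp add: mult_SL2)
      ultimately show ?thesis using b by blast
    qed
  next
    fix i j assume a: "q = 1" "w = replicate i 0 @ replicate j 1" "x = dg (2^i * 3^j)"
    from tr a have "(s = Some 1 \<and> q' = 1 \<and> m = dg 3) \<or> (s = None \<and> q' = 2 \<and> m = I)"
      unfolding DA_def by auto
    then show ?thesis
    proof
      assume b: "s = Some 1 \<and> q' = 1 \<and> m = dg 3"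
      have "?w = replicate i 0 @ replicate (Suc j) 1" using a b by (simp add: replicate_append_same)
      moreover have "?x = dg (2^i * 3^Suc j)" using a b by (simp add: mult_SL2 dg_mm mult_ac)
      ultimately show ?thesis using b by blast
    next
      assume b: "s = None \<and> q' = 2 \<and> m = I"
      have "?w = replicate i 0 @ replicate j 1 @ replicate 0 2" using a b by simp
      moreover have "?x = dg (2^i * 3^j / 6^0)" using a b by (simp add: mult_SL2)
      ultimately show ?thesis using b by blast
    qed
  next
    fix i j k assume a: "q = 2" "w = replicate i 0 @ replicate j 1 @ replicate k 2" "x = dg (2^i * 3^j / 6^k)"
    from tr a have b: "s = Some 2 \<and> q' = 2 \<and> m = dg (1/6)"
      unfolding DA_def by auto
    have "?w = replicate i 0 @ replicate j 1 @ replicate (Suc k) 2" using a b by (simp add: replicate_append_same)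
    moreover have "?x = dg (2^i * 3^j / 6^Suc k)" using a b by (simp add: mult_SL2 dg_mm mult_ac)
    ultimately show ?thesis using b by blast
  qed
qed

lemma reachA0: "(0, replicate i 0, dg (2^i)) \<in> gaut_reach (SL2 :: (rat \<times> rat \<times> rat \<times> rat) monoid) DA 0"
proof (induction i)
  case 0
  have "(0, [], \<one>\<^bsub>(SL2 :: (rat \<times> rat \<times> rat \<times> rat) monoid)\<^esub>) \<in> gaut_reach (SL2 :: (rat \<times> rat \<times> rat \<times> rat) monoid) DA 0"
    by (rule gaut_reach.init)
  then show ?case by (simp add: one_SL2 dg_1)
next
  case (Suc i)
  have "(0, Some 0, 0, dg 2) \<in> DA" unfolding DA_def by simp
  from gaut_reach.step[OF Suc this] show ?case
    by (simp add: mult_SL2 dg_mm replicate_append_same mult_ac)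
qed

lemma reachA1: "(1, replicate i 0 @ replicate j 1, dg (2^i * 3^j)) \<in> gaut_reach (SL2 :: (rat \<times> rat \<times> rat \<times> rat) monoid) DA 0"
proof (induction j)
  case 0
  have "(0, None, 1, I) \<in> DA" unfolding DA_def by simp
  from gaut_reach.step[OF reachA0[of i] this] show ?case by (simp add: mult_SL2 dg_def)
next
  case (Suc j)
  have "(1, Some 1, 1, dg 3) \<in> DA" unfolding DA_def by simp
  from gaut_reach.step[OF Suc this] show ?case
    by (simp add: mult_SL2 dg_mm replicate_append_same mult_ac mult.assoc)
qed

lemma reachA2: "(2, replicate i 0 @ replicate j 1 @ replicate k 2, dg (2^i * 3^j / 6^k)) \<in> gaut_reach (SL2 :: (rat \<times> rat \<times> rat \<times> rat) monoid) DA 0"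
proof (induction k)
  case 0
  have "(1, None, 2, I) \<in> DA" unfolding DA_def by simp
  from gaut_reach.step[OF reachA1[of i j] this] show ?case by (simp add: mult_SL2 dg_def)
next
  case (Suc k)
  have "(2, Some 2, 2, dg (1/6)) \<in> DA" unfolding DA_def by simp
  from gaut_reach.step[OF Suc this] show ?case
    by (simp add: mult_SL2 dg_mm replicate_append_same mult_ac)
qed

lemma pow23: "(2::nat)^i * 3^j = 2^k * 3^l \<Longrightarrow> i = k \<and> j = l"
proof (induction i arbitrary: k)
  case 0
  show ?case
  proof (cases k)
    case 0
    then show ?thesis using "0.prems" by simp
  next
    case (Suc k')
    then have e: "even ((2::nat)^k * 3^l)" by simp
    have o: "odd ((3::nat)^j)" by simp
    have "(3::nat)^j = 2^k * 3^l" using "0.prems" by simp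
    then show ?thesis using e o by simp
  qed
next
  case (Suc i)
  show ?case
  proof (cases k)
    case 0
    have e: "even ((2::nat)^Suc i * 3^j)" by simp
    have o: "odd ((3::nat)^l)" by simp
    have "(2::nat)^Suc i * 3^j = 3^l" using Suc.prems 0 by simp
    then show ?thesis using e o by simp
  next
    case (Suc k')
    then have "(2::nat)^i * 3^j = 2^k' * 3^l" using Suc.prems by simp
    then show ?thesis using Suc.IH Suc by simp
  qed
qed

lemma h6: "(6::rat)^k = 2^k * 3^k"
proof -
  have "(6::rat) = 2 * 3" by simp
  then show ?thesis by (metis power_mult_distrib)
qed

lemma langA: "gaut_lang (SL2 :: (rat \<times> rat \<times> rat \<times> rat) monoid) DA 0 {2} = range Lw"
proof
  show "gaut_lang (SL2 :: (rat \<times> rat \<times> rat \<times> rat) monoid) DA 0 {2} \<subseteq> range Lw"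
  proof
    fix w assume "w \<in> gaut_lang (SL2 :: (rat \<times> rat \<times> rat \<times> rat) monoid) DA 0 {2}"
    then have "(2, w, I) \<in> gaut_reach (SL2 :: (rat \<times> rat \<times> rat \<times> rat) monoid) DA 0"
      unfolding gaut_lang_def by (simp add: one_SL2)
    from reachA[OF this] have "\<exists>i j k. w = replicate i 0 @ replicate j 1 @ replicate k 2 \<and> I = dg (2^i * 3^j / 6^k)"
      by simp
    then obtain i j k where ijk: "w = replicate i 0 @ replicate j 1 @ replicate k 2"
      "I = dg (2^i * 3^j / 6^k)" by blast
    have e1: "(2::rat)^i * 3^j / 6^k = 1" using ijk(2) dg_fst fst_conv by metis
    then have "(2::rat)^i * 3^j = 6^k" by (simp only: divide_eq_1_iff)
    then have "(2::rat)^i * 3^j = 2^k * 3^k" using h6[of k] by (simp only:)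
    then have "of_nat ((2::nat)^i * 3^j) = (of_nat (2^k * 3^k) :: rat)"
      by (simp only: of_nat_mult of_nat_power of_nat_numeral)
    then have "(2::nat)^i * 3^j = 2^k * 3^k" using of_nat_eq_iff by blast
    then have "i = k \<and> j = k" using pow23 by blast
    then show "w \<in> range Lw" using ijk unfolding Lw_def by auto
  qed
next
  show "range Lw \<subseteq> gaut_lang (SL2 :: (rat \<times> rat \<times> rat \<times> rat) monoid) DA 0 {2}"
  proof
    fix w assume "w \<in> range Lw"
    then obtain n where n: "w = Lw n" by auto
    have "(6::rat)^n \<noteq> 0" by simp
    then have "(2::rat)^n * 3^n / 6^n = 1" using h6[of n] by simp
    then have "dg (2^n * 3^n / 6^n) = I" unfolding dg_def by simp
    then show "w \<in> gaut_lang (SL2 :: (rat \<times> rat \<times> rat \<times> rat) monoid) DA 0 {2}"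
      using reachA2[of n n n] n unfolding gaut_lang_def Lw_def by (simp add: one_SL2)
  qed
qed

lemma inQ: "range Lw \<in> lang_class (SL2 :: (rat \<times> rat \<times> rat \<times> rat) monoid) {0,1,2::nat}"
proof -
  have "is_gaut (SL2 :: (rat \<times> rat \<times> rat \<times> rat) monoid) {0,1,2::nat} {0,1,2} DA 0 {2}"
    unfolding is_gaut_def DA_def by (simp add: carrier_SL2 dg_def)
  then show ?thesis unfolding lang_class_def using langA by blast
qed


theorem theorem3p11:
  shows "(\<forall>\<Sigma> :: 'a set. finite \<Sigma> \<longrightarrow> lang_class SL2Z \<Sigma> \<subseteq> lang_class SL2Q \<Sigma>) \<and>
         (\<exists>\<Sigma> :: nat set. finite \<Sigma> \<and> lang_class SL2Z \<Sigma> \<subset> lang_class SL2Q \<Sigma>)"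
proof
  show "\<forall>\<Sigma> :: 'a set. finite \<Sigma> \<longrightarrow> lang_class SL2Z \<Sigma> \<subseteq> lang_class SL2Q \<Sigma>"
    using part1 by blast
  have "lang_class SL2Z {0,1,2::nat} \<subset> lang_class SL2Q {0,1,2::nat}"
    using part1[of "{0,1,2::nat}"] inQ notZ by blast
  then show "\<exists>\<Sigma> :: nat set. finite \<Sigma> \<and> lang_class SL2Z \<Sigma> \<subset> lang_class SL2Q \<Sigma>"
    by (intro exI[of _ "{0,1,2::nat}"]) simp
qed

end
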